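(* Let $\rho$ be a state of $A$, $\sigma$ a state of $B$, $\eta$ a state of $R$, and $0\le\varepsilon<1/2$. For any $\tilde\eta\in\mathcal{B}_\varepsilon(\eta)$, $$|\Delta H_{\tilde\eta}-\Delta H_\eta|\le\frac{2d_R^2\,\varepsilon}{\ln 2\,(1-2\varepsilon)}.$$ If moreover $\tilde\eta$ is normalized ($\mathrm{tr}\,\tilde\eta=1$), then $|\Delta H_{\tilde\eta}-\Delta H_\eta|\le r(\varepsilon):=\frac{2d_R^2\varepsilon}{\ln 2}$.
   Context: $G$ is a compact group with normalized Haar measure $dg$; finite-dimensional systems $A,B$ carry continuous unitary representations $U_A,U_B$; the reference $R$ has $d_R=d_B$ and carries $U_R(g)=\overline{U_B(g)}$. The $G$-twirl on $RX$ ($X=A,B$) is $\mathcal{G}(M)=\int dg\,(U_R(g)\otimes U_X(g))M(U_R(g)\otimes U_X(g))^\dagger$. For positive $\Omega_{RX}$, $H_{\min}(R|X)_\Omega=-\log_2\inf_{Y\ge0}\{\mathrm{tr}[Y]:\mathbb{1}_R\otimes Y\ge\Omega_{RX}\}$. For a positive operator $\eta$ on $R$ with trace at most one and a state $\tau$ on $X$, $H_\eta(\tau):=H_{\min}(R|X)_{\mathcal{G}(\eta\otimes\tau)}$ and $\Delta H_\eta:=H_\eta(\sigma)-H_\eta(\rho)$. The generalized trace distance is $D(\rho,\sigma)=\tfrac12\|\rho-\sigma\|_1+\tfrac12|\mathrm{tr}\rho-\mathrm{tr}\sigma|$, and $\mathcal{B}_\varepsilon(\eta)=\{\tilde\eta\ge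 0:\mathrm{tr}\tilde\eta\le 1,\ D(\eta,\tilde\eta)\le\varepsilon\}$ is the $\varepsilon$-ball of normalized and subnormalized states. *)

theory Defs
  imports "HOL-Probability.Probability"
begin

text \<open>Finite-dimensional systems are modelled by finite index types; an operator on a
system with index type 'n is a matrix of type complex^'n^'n.  The composite system RX
has index type 'r \<times> 'x.\<close>

type_synonym 'n cmat = "complex^'n^'n"

definition ctrace :: "'n::finite cmat \<Rightarrow> complex" where
  "ctrace M = (\<Sum>i\<in>UNIV. M $ i $ i)"

definition cadj :: "'n::finite cmat \<Rightarrow> 'n cmat" where
  "cadj M = (\<chi> i j. cnj (M $ j $ i))"

definition cconj :: "'n::finite cmat \<Rightarrow> 'n cmat" where
  "cconj M = (\<chi> i j. cnj (M $ i $ j))"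

definition unitary :: "'n::finite cmat \<Rightarrow> bool" where
  "unitary V \<longleftrightarrow> cadj V ** V = mat 1 \<and> V ** cadj V = mat 1"

definition psd :: "'n::finite cmat \<Rightarrow> bool" where
  "psd M \<longleftrightarrow> (\<forall>v::complex^'n.
     (let q = (\<Sum>i\<in>UNIV. \<Sum>j\<in>UNIV. cnj (v $ i) * M $ i $ j * v $ j) in Im q = 0 \<and> Re q \<ge> 0))"

definition is_state :: "'n::finite cmat \<Rightarrow> bool" where
  "is_state \<rho> \<longleftrightarrow> psd \<rho> \<and> ctrace \<rho> = 1"

definition is_subnormalized :: "'n::finite cmat \<Rightarrow> bool" where
  "is_subnormalized \<rho> \<longleftrightarrow> psd \<rho> \<and> Re (ctrace \<rho>) \<le> 1"

definition kron :: "'r::finite cmat \<Rightarrow> 'x::finite cmat \<Rightarrow> ('r \<times> 'x) cmat" where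
  "kron P Q = (\<chi> p q. P $ fst p $ fst q * Q $ snd p $ snd q)"

text \<open>Trace norm, via its variational form \<parallel>X\<parallel>_1 = max over unitaries V of |tr(V X)|.\<close>
definition trace_norm :: "'n::finite cmat \<Rightarrow> real" where
  "trace_norm X = (SUP V\<in>{V. unitary V}. cmod (ctrace (V ** X)))"

definition gen_trace_dist :: "'n::finite cmat \<Rightarrow> 'n cmat \<Rightarrow> real" where
  "gen_trace_dist \<rho> \<sigma> = trace_norm (\<rho> - \<sigma>) / 2 + \<bar>Re (ctrace \<rho>) - Re (ctrace \<sigma>)\<bar> / 2"

definition eps_ball :: "real \<Rightarrow> 'n::finite cmat \<Rightarrow> 'n cmat set" where
  "eps_ball \<epsilon> \<eta> = {\<eta>'. is_subnormalized \<eta>' \<and> gen_trace_dist \<eta> \<eta>' \<le> \<epsilon>}"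

definition compact_group :: "'g::{t2_space, group_add} itself \<Rightarrow> bool" where
  "compact_group _ \<longleftrightarrow> compact (UNIV :: 'g set)
     \<and> continuous_on UNIV (\<lambda>p::'g \<times> 'g. fst p + snd p)
     \<and> continuous_on UNIV (uminus :: 'g \<Rightarrow> 'g)"

definition normalized_haar :: "'g::{t2_space, group_add} measure \<Rightarrow> bool" where
  "normalized_haar M \<longleftrightarrow> space M = UNIV \<and> sets M = sets (borel :: 'g measure)
     \<and> prob_space M \<and> (\<forall>h. distr M M (\<lambda>g. h + g) = M)"

definition unitary_rep :: "('g::{topological_space, group_add} \<Rightarrow> 'n::finite cmat) \<Rightarrow> bool" where
  "unitary_rep U \<longleftrightarrow> (\<forall>g. unitary (U g)) \<and> (\<forall>g h. U (g + h) = U g ** U h)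
     \<and> U 0 = mat 1 \<and> continuous_on UNIV U"

definition twirl :: "'g measure \<Rightarrow> ('g \<Rightarrow> 'r::finite cmat) \<Rightarrow> ('g \<Rightarrow> 'x::finite cmat)
    \<Rightarrow> ('r \<times> 'x) cmat \<Rightarrow> ('r \<times> 'x) cmat" where
  "twirl M UR UX \<Omega> = integral\<^sup>L M (\<lambda>g. kron (UR g) (UX g) ** \<Omega> ** cadj (kron (UR g) (UX g)))"

definition Hmin :: "('r::finite \<times> 'x::finite) cmat \<Rightarrow> real" where
  "Hmin \<Omega> = - log 2 (Inf {Re (ctrace Y) | Y :: 'x cmat. psd Y \<and> psd (kron (mat 1 :: 'r cmat) Y - \<Omega>)})"

definition H_eta :: "'g measure \<Rightarrow> ('g \<Rightarrow> 'r::finite cmat) \<Rightarrow> ('g \<Rightarrow> 'x::finite cmat)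
    \<Rightarrow> 'r cmat \<Rightarrow> 'x cmat \<Rightarrow> real" where
  "H_eta M UR UX \<eta> \<tau> = Hmin (twirl M UR UX (kron \<eta> \<tau>))"

definition Delta_H :: "'g measure \<Rightarrow> ('g \<Rightarrow> 'a::finite cmat) \<Rightarrow> ('g \<Rightarrow> 'b::finite cmat)
    \<Rightarrow> 'b cmat \<Rightarrow> 'a cmat \<Rightarrow> 'b cmat \<Rightarrow> real" where
  "Delta_H M UA UB \<eta> \<rho> \<sigma> =
     H_eta M (\<lambda>g. cconj (UB g)) UB \<eta> \<sigma> - H_eta M (\<lambda>g. cconj (UB g)) UA \<eta> \<rho>"

end

theory Submission
  imports Defs
begin

definition sf :: "'n::finite cmat \<Rightarrow> complex^'n \<Rightarrow> complex^'n \<Rightarrow> complex" where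
  "sf M u v = (\<Sum>i\<in>UNIV. \<Sum>j\<in>UNIV. cnj (u$i) * M$i$j * v$j)"

abbreviation qf :: "'n::finite cmat \<Rightarrow> complex^'n \<Rightarrow> complex" where
  "qf M v \<equiv> sf M v v"

lemma psd_qf: "psd M \<longleftrightarrow> (\<forall>v. Im (qf M v) = 0 \<and> 0 \<le> Re (qf M v))"
  by (simp add: psd_def sf_def Let_def)

lemma sf_add_mat: "sf (A + B) u v = sf A u v + sf B u v"
  by (simp add: sf_def algebra_simps sum.distrib)
lemma sf_diff_mat: "sf (A - B) u v = sf A u v - sf B u v"
  by (simp add: sf_def algebra_simps sum_subtractf)
lemma scaleR_mat_nth[simp]: "(c *\<^sub>R A) $ i $ j = complex_of_real c * (A::'n::finite cmat) $ i $ j"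
  unfolding vector_scaleR_component by (rule scaleR_conv_of_real)
lemma sf_scaleR_mat: "sf (c *\<^sub>R A) u v = of_real c * sf A u v"
  unfolding sf_def scaleR_mat_nth by (simp add: sum_distrib_left algebra_simps)
lemma sf_zero_mat[simp]: "sf 0 u v = 0"
  by (simp add: sf_def)
lemma sf_sum_mat: "finite S \<Longrightarrow> sf (\<Sum>k\<in>S. A k) u v = (\<Sum>k\<in>S. sf (A k) u v)"
  by (induction S rule: finite_induct) (auto simp: sf_add_mat)
lemma sf_add_left: "sf A (u + w) v = sf A u v + sf A w v"
  by (simp add: sf_def algebra_simps sum.distrib)
lemma sf_add_right: "sf A u (v + w) = sf A u v + sf A u w"
  by (simp add: sf_def algebra_simps sum.distrib)
lemma sf_smult_left: "sf A (c *s u) v = cnj c * sf A u v"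
  by (simp add: sf_def sum_distrib_left algebra_simps)
lemma sf_smult_right: "sf A u (c *s v) = c * sf A u v"
  by (simp add: sf_def sum_distrib_left algebra_simps)
lemma sf_axis: "sf A (axis i 1) (axis j 1) = A$i$j"
  by (simp add: sf_def axis_def if_distrib if_distribR sum.If_cases)
lemma sf_axis_left: "sf A (axis i 1) v = (\<Sum>j\<in>UNIV. A$i$j * v$j)"
  by (simp add: sf_def axis_def if_distrib if_distribR sum.If_cases)
lemma sf_mat1: "sf (mat 1) u v = (\<Sum>i\<in>UNIV. cnj (u$i) * v$i)"
  by (simp add: sf_def mat_def if_distrib if_distribR sum.If_cases)

lemma psd_add: "psd A \<Longrightarrow> psd B \<Longrightarrow> psd (A + B)"
  by (simp add: psd_qf sf_add_mat)
lemma psd_scaleR: "psd A \<Longrightarrow> 0 \<le> c \<Longrightarrow> psd (c *\<^sub>R A)"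
  by (simp add: psd_qf sf_scaleR_mat)
lemma psd_zero: "psd 0"
  by (simp add: psd_qf)
lemma psd_sum: "finite S \<Longrightarrow> (\<And>k. k \<in> S \<Longrightarrow> psd (A k)) \<Longrightarrow> psd (\<Sum>k\<in>S. A k)"
  by (induction S rule: finite_induct) (auto simp: psd_zero psd_add)

lemma psd_diag: assumes "psd A" shows "Im (A$i$i) = 0" "0 \<le> Re (A$i$i)"
  using assms unfolding psd_qf by (metis sf_axis)+

lemma psd_herm: assumes "psd A" shows "A$i$j = cnj (A$j$i)"
proof (cases "i = j")
  case True
  then show ?thesis using psd_diag[OF assms, of i] by (simp add: complex_eq_iff)
next
  case False
  have e: "qf A (axis i 1 + z *s axis j 1) = A$i$i + z * A$i$j + cnj z * A$j$i + cnj z * z * A$j$j" for z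
    unfolding sf_add_left sf_add_right sf_smult_left sf_smult_right sf_axis by (simp add: algebra_simps)
  have "Im (qf A (axis i 1 + 1 *s axis j 1)) = 0" "Im (qf A (axis i 1 + \<i> *s axis j 1)) = 0"
    using assms unfolding psd_qf by blast+
  then have "Im (A$i$j + A$j$i) = 0" "Re (A$i$j - A$j$i) = 0"
    unfolding e using psd_diag[OF assms, of i] psd_diag[OF assms, of j] by auto
  then show ?thesis by (simp add: complex_eq_iff)
qed

lemma sf_herm: assumes "\<And>i j. A$i$j = cnj (A$j$i)" shows "sf A u v = cnj (sf A v u)"
proof -
  have h: "cnj (A$i$j) = A$j$i" for i j by (simp add: assms[of j i])
  have "cnj (sf A v u) = (\<Sum>i\<in>UNIV. \<Sum>j\<in>UNIV. cnj (u$j) * A$j$i * v$i)"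
    unfolding sf_def by (simp add: h mult_ac)
  also have "\<dots> = sf A u v" unfolding sf_def by (rule sum.swap)
  finally show ?thesis by simp
qed

lemma real_quad_aux:
  fixes a B c :: real
  assumes "\<And>t. 0 \<le> c - 2 * t * B + t^2 * B * a" "0 \<le> B" "0 \<le> a" "0 \<le> c"
  shows "B \<le> a * c"
proof (cases "a = 0")
  case True
  show ?thesis
  proof (rule ccontr)
    assume "\<not> B \<le> a * c"
    then have "B > 0" using True by simp
    have "0 \<le> c - 2 * ((c+1)/(2*B)) * B + ((c+1)/(2*B))^2 * B * a" by (rule assms(1))
    also have "\<dots> = -1" using \<open>B > 0\<close> True by (simp add: field_simps)
    finally show False by simp
  qed
next
  case False
  then have "a > 0" using assms by simp
  have "0 \<le> c - 2 * (1/a) * B + (1/a)^2 * B * a" by (rule assms(1))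
  also have "\<dots> = c - B / a" using \<open>a > 0\<close> by (simp add: field_simps power2_eq_square)
  finally have "B / a \<le> c" by simp
  then show ?thesis using \<open>a > 0\<close> by (simp add: field_simps mult.commute)
qed

lemma psd_cs:
  assumes "psd Q"
  shows "(cmod (sf Q (axis s 1) v))^2 \<le> Re (Q$s$s) * Re (qf Q v)"
proof -
  define b where "b = sf Q (axis s 1) v"
  define a where "a = Re (Q$s$s)"
  define c where "c = Re (qf Q v)"
  have herm: "\<And>i j. Q$i$j = cnj (Q$j$i)" using psd_herm[OF assms] by blast
  have Qss: "Q$s$s = of_real a" using psd_diag[OF assms, of s] unfolding a_def by (simp add: complex_eq_iff)
  have e: "qf Q (v + z *s axis s 1) = qf Q v + cnj z * b + z * cnj b + cnj z * z * Q$s$s" for z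
  proof -
    have "sf Q v (axis s 1) = cnj b" unfolding b_def by (rule sf_herm[OF herm])
    then show ?thesis
      unfolding sf_add_left sf_add_right sf_smult_left sf_smult_right sf_axis b_def
      by (simp add: algebra_simps)
  qed
  have "0 \<le> c - 2 * t * (cmod b)^2 + t^2 * (cmod b)^2 * a" for t
  proof -
    have "0 \<le> Re (qf Q (v + (- (of_real t * b)) *s axis s 1))"
      using assms unfolding psd_qf by blast
    also have "Re (qf Q (v + (- (of_real t * b)) *s axis s 1)) = c - 2 * t * (cmod b)^2 + t^2 * (cmod b)^2 * a"
    proof -
      have bb: "cnj b * b = of_real ((cmod b)^2)" "b * cnj b = of_real ((cmod b)^2)"
        by (metis complex_norm_square mult.commute)+
      have "qf Q (v + (- (of_real t * b)) *s axis s 1) =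
            qf Q v - of_real (2 * t) * (cnj b * b) + of_real (t^2 * a) * (cnj b * b)"
        unfolding e Qss by (simp add: algebra_simps power2_eq_square)
      then show ?thesis unfolding bb c_def by simp
    qed
    finally show ?thesis .
  qed
  then have "(cmod b)^2 \<le> a * c"
    by (rule real_quad_aux) (use assms psd_diag[OF assms, of s] in \<open>auto simp: a_def c_def psd_qf\<close>)
  then show ?thesis unfolding a_def b_def c_def .
qed

definition outer :: "complex^'n \<Rightarrow> complex^'n^'n" where
  "outer w = (\<chi> i j. w$i * cnj (w$j))"

lemma qf_outer: "qf (outer w) v = of_real ((cmod (\<Sum>j\<in>UNIV. cnj (w$j) * v$j))^2)"
proof -
  define X where "X = (\<Sum>j\<in>UNIV. cnj (w$j) * v$j)"
  have "qf (outer w) v = cnj X * X"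
    unfolding sf_def outer_def X_def
    apply (simp add: sum_product)
    apply (subst sum.swap)
    apply (simp add: mult_ac)
    apply (rule sum.swap)
    done
  also have "\<dots> = of_real ((cmod X)^2)" by (metis complex_norm_square mult.commute)
  finally show ?thesis unfolding X_def .
qed

lemma psd_outer: "psd (outer w)"
  unfolding psd_qf qf_outer by simp

lemma outer_zero[simp]: "outer 0 = 0"
  by (simp add: outer_def vec_eq_iff)

lemma psd_decomp_aux:
  "finite S \<Longrightarrow> \<forall>Q. psd Q \<and> (\<forall>i j. i \<notin> S \<or> j \<notin> S \<longrightarrow> Q$i$j = 0) \<longrightarrow> (\<exists>W. Q = (\<Sum>k\<in>S. outer (W k)))"
proof (induction S rule: finite_induct)
  case empty
  then show ?case by (auto simp: vec_eq_iff)
next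
  case (insert s S)
  show ?case
  proof (intro allI impI, elim conjE)
    fix Q :: "complex^'a^'a"
    assume psd: "psd Q" and supp: "\<forall>i j. i \<notin> insert s S \<or> j \<notin> insert s S \<longrightarrow> Q$i$j = 0"
    have herm: "\<And>i j. Q$i$j = cnj (Q$j$i)" using psd_herm[OF psd] by blast
    define a where "a = Re (Q$s$s)"
    have Qss: "Q$s$s = of_real a" using psd_diag[OF psd, of s] unfolding a_def by (simp add: complex_eq_iff)
    have a0: "a \<ge> 0" using psd_diag[OF psd, of s] unfolding a_def by simp
    show "\<exists>W. Q = (\<Sum>k\<in>insert s S. outer (W k))"
    proof (cases "a = 0")
      case True
      have row: "Q$s$j = 0" for j
      proof -
        have "(cmod (sf Q (axis s 1) (axis j 1)))^2 \<le> Re (Q$s$s) * Re (qf Q (axis j 1))"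
          by (rule psd_cs[OF psd])
        then show ?thesis using True unfolding sf_axis a_def by simp
      qed
      have col: "Q$j$s = 0" for j using row[of j] herm[of j s] by simp
      have "\<forall>i j. i \<notin> S \<or> j \<notin> S \<longrightarrow> Q$i$j = 0"
      proof (intro allI impI)
        fix i j assume "i \<notin> S \<or> j \<notin> S"
        then show "Q$i$j = 0" using supp row col by (cases "i = s"; cases "j = s"; auto)
      qed
      then obtain W where W: "Q = (\<Sum>k\<in>S. outer (W k))" using insert.IH psd by blast
      have "(\<Sum>k\<in>insert s S. outer ((W(s := 0)) k)) = (\<Sum>k\<in>S. outer (W k))"
        using insert.hyps by (simp add: sum.insert) (intro sum.cong, auto)
      then show ?thesis using W by metis
    next
      case False
      then have apos: "a > 0" using a0 by simp
      define w where "w = (\<chi> i. Q$i$s / of_real (sqrt a))"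
      define Q' where "Q' = Q - outer w"
      have ow: "outer w $ i $ j = Q$i$s * Q$s$j / of_real a" for i j
      proof -
        have "outer w $ i $ j = (Q$i$s / of_real (sqrt a)) * cnj (Q$j$s / of_real (sqrt a))"
          unfolding outer_def w_def by (simp only: vec_lambda_beta)
        also have "\<dots> = Q$i$s * cnj (Q$j$s) / (of_real (sqrt a) * of_real (sqrt a))"
          by simp
        also have "cnj (Q$j$s) = Q$s$j" using herm[of s j] by simp
        also have "(of_real (sqrt a) * of_real (sqrt a) :: complex) = of_real a"
          using a0 by (simp flip: of_real_mult)
        finally show ?thesis .
      qed
      have psd': "psd Q'"
        unfolding psd_qf
      proof
        fix v
        define b where "b = sf Q (axis s 1) v"
        have cs: "(cmod b)^2 \<le> a * Re (qf Q v)" unfolding b_def a_def by (rule psd_cs[OF psd])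
        have "(\<Sum>j\<in>UNIV. cnj (w$j) * v$j) = b / of_real (sqrt a)"
          proof -
          have h': "cnj (Q$j$s) = Q$s$j" for j using herm[of s j] by simp
          show ?thesis unfolding b_def sf_axis_left w_def by (simp add: h' sum_divide_distrib)
        qed
        then have "qf (outer w) v = of_real ((cmod b)^2 / a)"
          unfolding qf_outer using a0 by (simp add: norm_divide power_divide)
        then have "qf Q' v = qf Q v - of_real ((cmod b)^2 / a)"
          unfolding Q'_def sf_diff_mat by simp
        moreover have "(cmod b)^2 / a \<le> Re (qf Q v)" using cs apos by (simp add: field_simps)
        ultimately show "Im (qf Q' v) = 0 \<and> 0 \<le> Re (qf Q' v)"
          using psd unfolding psd_qf by simp
      qed
      have supp': "\<forall>i j. i \<notin> S \<or> j \<notin> S \<longrightarrow> Q'$i$j = 0"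
      proof (intro allI impI)
        fix i j assume "i \<notin> S \<or> j \<notin> S"
        then consider "i = s" | "j = s" | "i \<notin> insert s S" | "j \<notin> insert s S" by blast
        then show "Q'$i$j = 0"
        proof cases
          case 1 then show ?thesis using Qss apos by (simp add: Q'_def ow)
        next
          case 2 then show ?thesis using Qss apos by (simp add: Q'_def ow)
        next
          case 3 then show ?thesis using supp by (simp add: Q'_def ow)
        next
          case 4 then show ?thesis using supp by (simp add: Q'_def ow)
        qed
      qed
      obtain W where W: "Q' = (\<Sum>k\<in>S. outer (W k))" using insert.IH psd' supp' by blast
      have "(\<Sum>k\<in>insert s S. outer ((W(s := w)) k)) = outer w + (\<Sum>k\<in>S. outer (W k))"
        using insert.hyps by (simp add: sum.insert) (intro sum.cong, auto)
      also have "\<dots> = Q" using W unfolding Q'_def by (metis add.commute diff_add_cancel)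
      finally show ?thesis by metis
    qed
  qed
qed

lemma psd_decomp: "psd (Q::complex^'n::finite^'n) \<Longrightarrow> \<exists>W::'n \<Rightarrow> complex^'n. Q = (\<Sum>k\<in>UNIV. outer (W k))"
  using psd_decomp_aux[of UNIV] by auto

lemma sum_UNIV_prod: "(\<Sum>p\<in>(UNIV::('a::finite\<times>'b::finite) set). f p) = (\<Sum>i\<in>UNIV. \<Sum>k\<in>UNIV. f (i,k))"
  by (simp add: sum.cartesian_product)

lemma kron_nth: "kron A B $ p $ q = A $ fst p $ fst q * B $ snd p $ snd q"
  by (simp add: kron_def)

lemma kron_add_left: "kron (A + A') B = kron A B + kron A' B"
  by (simp add: kron_def vec_eq_iff algebra_simps)
lemma kron_diff_left: "kron (A - A') B = kron A B - kron A' B"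
  by (simp add: kron_def vec_eq_iff algebra_simps)
lemma kron_zero_left[simp]: "kron 0 B = 0"
  by (simp add: kron_def vec_eq_iff)
lemma kron_scaleR_left: "kron (c *\<^sub>R A) B = c *\<^sub>R kron A B"
  by (simp add: kron_def vec_eq_iff mult_ac del: vector_scaleR_component)
lemma kron_add_right: "kron A (B + B') = kron A B + kron A B'"
  by (simp add: kron_def vec_eq_iff algebra_simps)
lemma kron_scaleR_right: "kron A (c *\<^sub>R B) = c *\<^sub>R kron A B"
  by (simp add: kron_def vec_eq_iff mult_ac del: vector_scaleR_component)
lemma kron_sum_left: "finite S \<Longrightarrow> kron (\<Sum>k\<in>S. A k) B = (\<Sum>k\<in>S. kron (A k) B)"
  by (induction S rule: finite_induct) (auto simp: kron_add_left)

lemma psd_kron_outer: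
  fixes w :: "complex^'r::finite" and \<tau> :: "complex^'x::finite^'x"
  assumes "psd \<tau>"
  shows "psd (kron (outer w) \<tau>)"
  unfolding psd_qf
proof
  fix v :: "complex^('r \<times> 'x)"
  define x where "x = (\<chi> l. \<Sum>j\<in>UNIV. cnj (w$j) * v$(j,l))"
  have "qf (kron (outer w) \<tau>) v = qf \<tau> x"
  proof -
    have "qf (kron (outer w) \<tau>) v =
      (\<Sum>i\<in>UNIV. \<Sum>k\<in>UNIV. \<Sum>j\<in>UNIV. \<Sum>l\<in>UNIV. cnj (v$(i,k)) * w$i * cnj (w$j) * \<tau>$k$l * v$(j,l))"
      unfolding sf_def sum_UNIV_prod by (simp add: kron_def outer_def mult_ac)
    also have "\<dots> = (\<Sum>i\<in>UNIV. \<Sum>k\<in>UNIV. \<Sum>l\<in>UNIV. \<Sum>j\<in>UNIV. cnj (v$(i,k)) * w$i * cnj (w$j) * \<tau>$k$l * v$(j,l))"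
      by (intro sum.cong refl, rule sum.swap)
    also have "\<dots> = (\<Sum>k\<in>UNIV. \<Sum>i\<in>UNIV. \<Sum>l\<in>UNIV. \<Sum>j\<in>UNIV. cnj (v$(i,k)) * w$i * cnj (w$j) * \<tau>$k$l * v$(j,l))"
      by (rule sum.swap)
    also have "\<dots> = (\<Sum>k\<in>UNIV. \<Sum>l\<in>UNIV. \<Sum>i\<in>UNIV. \<Sum>j\<in>UNIV. cnj (v$(i,k)) * w$i * cnj (w$j) * \<tau>$k$l * v$(j,l))"
      by (intro sum.cong refl, rule sum.swap)
    also have "\<dots> = qf \<tau> x"
      unfolding sf_def x_def by (simp add: sum_distrib_left sum_distrib_right mult_ac)
    finally show ?thesis .
  qed
  then show "Im (qf (kron (outer w) \<tau>) v) = 0 \<and> 0 \<le> Re (qf (kron (outer w) \<tau>) v)"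
    using assms unfolding psd_qf by simp
qed

lemma psd_kron:
  fixes D :: "complex^'r::finite^'r" and \<tau> :: "complex^'x::finite^'x"
  assumes "psd D" "psd \<tau>"
  shows "psd (kron D \<tau>)"
proof -
  obtain W :: "'r \<Rightarrow> complex^'r" where W: "D = (\<Sum>k\<in>UNIV. outer (W k))" using psd_decomp[OF assms(1)] by blast
  have "kron D \<tau> = (\<Sum>k\<in>UNIV. kron (outer (W k)) \<tau>)" unfolding W by (simp add: kron_sum_left)
  then show ?thesis by (simp add: psd_sum psd_kron_outer assms)
qed

lemma kron_mult: "kron A B ** kron C D = kron (A ** C) (B ** D)"
  by (simp add: vec_eq_iff matrix_matrix_mult_def kron_def sum_UNIV_prod sum_product mult_ac)

lemma cadj_kron: "cadj (kron A B) = kron (cadj A) (cadj B)"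
  by (simp add: vec_eq_iff cadj_def kron_def)

lemma kron_mat1: "kron (mat 1 :: 'a::finite cmat) (mat 1 :: 'b::finite cmat) = mat 1"
  by (simp add: vec_eq_iff kron_def mat_def prod_eq_iff)

lemma ctrace_kron: "ctrace (kron A B) = ctrace A * ctrace B"
  by (simp add: ctrace_def kron_def sum_UNIV_prod sum_product)

lemma unitary_kron: "unitary A \<Longrightarrow> unitary B \<Longrightarrow> unitary (kron A B)"
  unfolding unitary_def by (simp add: cadj_kron kron_mult kron_mat1)

lemma cadj_cconj: "cadj (cconj A) = cconj (cadj A)"
  by (simp add: vec_eq_iff cadj_def cconj_def)
lemma cconj_mult: "cconj (A ** B) = cconj A ** cconj B"
  by (simp add: vec_eq_iff cconj_def matrix_matrix_mult_def)
lemma cconj_mat1: "cconj (mat 1) = mat 1"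
  by (simp add: vec_eq_iff cconj_def mat_def)
lemma unitary_cconj: "unitary A \<Longrightarrow> unitary (cconj A)"
  unfolding unitary_def by (metis cadj_cconj cconj_mult cconj_mat1)

lemma mm_diff_left: "((A::'n::finite cmat) - B) ** C = A ** C - B ** C"
  by (simp add: matrix_matrix_mult_def vec_eq_iff algebra_simps sum_subtractf)
lemma mm_diff_right: "(A::'n::finite cmat) ** (B - C) = A ** B - A ** C"
  by (simp add: matrix_matrix_mult_def vec_eq_iff algebra_simps sum_subtractf)
lemma mm_add_left: "((A::'n::finite cmat) + B) ** C = A ** C + B ** C"
  by (simp add: matrix_matrix_mult_def vec_eq_iff algebra_simps sum.distrib)
lemma cscale: "c *\<^sub>R (z::complex) = complex_of_real c * z"
  by (simp add: scaleR_conv_of_real)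

lemma scaleR_mat_eq: "c *\<^sub>R (A::'n::finite cmat) = (\<chi> i j. of_real c * A$i$j)"
  by (simp add: vec_eq_iff, simp add: scaleR_conv_of_real)
lemma mm_scaleR_left: "(c *\<^sub>R (A::'n::finite cmat)) ** B = c *\<^sub>R (A ** B)"
  by (simp add: matrix_matrix_mult_def vec_eq_iff sum_distrib_left mult_ac cscale)
lemma mm_scaleR_right: "(A::'n::finite cmat) ** (c *\<^sub>R B) = c *\<^sub>R (A ** B)"
  by (simp add: matrix_matrix_mult_def vec_eq_iff sum_distrib_left mult_ac cscale)

lemma ctrace_add: "ctrace (A + B) = ctrace A + ctrace B"
  by (simp add: ctrace_def sum.distrib)
lemma ctrace_diff: "ctrace (A - B) = ctrace A - ctrace B"
  by (simp add: ctrace_def sum_subtractf)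
lemma ctrace_scaleR: "ctrace (c *\<^sub>R A) = of_real c * ctrace A"
  by (simp add: ctrace_def sum_distrib_left del: vector_scaleR_component)
lemma ctrace_zero[simp]: "ctrace 0 = 0"
  by (simp add: ctrace_def)
lemma ctrace_comm: "ctrace ((A::'n::finite cmat) ** B) = ctrace (B ** A)"
  unfolding ctrace_def matrix_matrix_mult_def by (simp, subst sum.swap, simp add: mult.commute)

lemma cadj_mat1: "cadj (mat 1 :: 'n::finite cmat) = mat 1"
  by (simp add: vec_eq_iff cadj_def mat_def)
lemma unitary_mat1: "unitary (mat 1 :: 'n::finite cmat)"
  by (simp add: unitary_def cadj_mat1)

lemma unitary_entry_bound:
  assumes "unitary (V::'n::finite cmat)" shows "cmod (V$i$j) \<le> 1"
proof -
  have "(cadj V ** V) $ j $ j = 1" using assms unfolding unitary_def by (simp add: mat_def)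
  then have "(\<Sum>k\<in>UNIV. cnj (V$k$j) * V$k$j) = 1"
    by (simp add: matrix_matrix_mult_def cadj_def)
  moreover have "cnj (V$k$j) * V$k$j = of_real ((cmod (V$k$j))^2)" for k
    by (metis complex_norm_square mult.commute)
  ultimately have "complex_of_real (\<Sum>k\<in>UNIV. (cmod (V$k$j))^2) = 1"
    unfolding of_real_sum by simp
  then have s1: "(\<Sum>k\<in>UNIV. (cmod (V$k$j))^2) = 1" by (simp only: of_real_eq_1_iff)
  have "(cmod (V$i$j))^2 \<le> (\<Sum>k\<in>UNIV. (cmod (V$k$j))^2)"
    by (rule member_le_sum) auto
  then have "(cmod (V$i$j))^2 \<le> 1" using s1 by simp
  then show ?thesis by (simp add: power_le_one_iff abs_square_le_1)
qed

lemma trace_prod_bound: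
  assumes "unitary (V::'n::finite cmat)"
  shows "cmod (ctrace (V ** X)) \<le> (\<Sum>i\<in>UNIV. \<Sum>k\<in>UNIV. cmod (X$k$i))"
proof -
  have "cmod (ctrace (V ** X)) = cmod (\<Sum>i\<in>UNIV. \<Sum>k\<in>UNIV. V$i$k * X$k$i)"
    by (simp add: ctrace_def matrix_matrix_mult_def)
  also have "\<dots> \<le> (\<Sum>i\<in>UNIV. \<Sum>k\<in>UNIV. cmod (V$i$k * X$k$i))"
    by (intro order_trans[OF norm_sum] sum_mono norm_sum)
  also have "\<dots> \<le> (\<Sum>i\<in>UNIV. \<Sum>k\<in>UNIV. cmod (X$k$i))"
    by (intro sum_mono) (simp add: norm_mult mult_left_le_one_le unitary_entry_bound[OF assms])
  finally show ?thesis .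
qed

lemma trace_norm_upper:
  assumes "unitary V" shows "cmod (ctrace (V ** X)) \<le> trace_norm X"
  unfolding trace_norm_def
proof (rule cSUP_upper)
  show "V \<in> {V. unitary V}" using assms by simp
  show "bdd_above ((\<lambda>V. cmod (ctrace (V ** X))) ` {V. unitary V})"
    by (rule bdd_aboveI2[where M="\<Sum>i\<in>UNIV. \<Sum>k\<in>UNIV. cmod (X$k$i)"]) (auto intro: trace_prod_bound)
qed

lemma trace_norm_ge_trace: "cmod (ctrace X) \<le> trace_norm X"
  using trace_norm_upper[OF unitary_mat1, of X] by simp

lemma ctrace_real: assumes "\<And>v. Im (qf X v) = 0" shows "Im (ctrace X) = 0"
proof -
  have "Im (X$i$i) = 0" for i using assms[of "axis i 1"] by (simp add: sf_axis)
  then show ?thesis by (simp add: ctrace_def)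
qed

definition n2 :: "complex^'n::finite \<Rightarrow> real" where "n2 v = (\<Sum>i\<in>UNIV. (cmod (v$i))^2)"

lemma qf_mat1: "qf (mat 1) v = of_real (n2 v)"
proof -
  have "cnj (v$i) * v$i = of_real ((cmod (v$i))^2)" for i by (metis complex_norm_square mult.commute)
  then show ?thesis unfolding sf_mat1 n2_def by simp
qed

lemma outer_sq: "outer v ** outer v = n2 v *\<^sub>R outer v"
proof -
  have "cnj (v$i) * v$i = of_real ((cmod (v$i))^2)" for i by (metis complex_norm_square mult.commute)
  then have s: "(\<Sum>k\<in>UNIV. cnj (v$k) * v$k) = of_real (n2 v)" unfolding n2_def by simp
  show ?thesis
    apply (simp add: vec_eq_iff matrix_matrix_mult_def outer_def del: vector_scaleR_component)
    apply (intro allI)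
    apply (subst s[symmetric])
    apply (simp add: sum_distrib_left sum_distrib_right mult_ac)
    done
qed

lemma cadj_outer: "cadj (outer v) = outer v"
  by (simp add: vec_eq_iff cadj_def outer_def mult.commute)

lemma cadj_diff: "cadj (A - B) = cadj A - cadj B"
  by (simp add: vec_eq_iff cadj_def)
lemma cadj_scaleR: "cadj (c *\<^sub>R A) = c *\<^sub>R cadj A"
  by (simp add: vec_eq_iff cadj_def del: vector_scaleR_component)

lemma ctrace_outer: "ctrace (outer v ** X) = qf X v"
  unfolding ctrace_def matrix_matrix_mult_def outer_def sf_def
  by (simp add: sum_distrib_left sum_distrib_right mult_ac, subst sum.swap, simp add: mult_ac)

lemma trace_norm_qf:
  assumes herm: "\<And>v. Im (qf X v) = 0"
  shows "\<bar>Re (qf X v)\<bar> \<le> trace_norm X * n2 v"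
proof (cases "v = 0")
  case True
  then show ?thesis by (simp add: sf_def n2_def)
next
  case False
  then obtain i where "v$i \<noteq> 0" by (auto simp: vec_eq_iff)
  then have "0 < (cmod (v$i))^2" by simp
  then have npos: "n2 v > 0" unfolding n2_def
    by (rule sum_pos2[OF finite_class.finite_UNIV UNIV_I]) simp
  define a where "a = 2 / n2 v"
  define V where "V = a *\<^sub>R outer v - mat 1"
  have cV: "cadj V = V" unfolding V_def by (simp add: cadj_diff cadj_scaleR cadj_outer cadj_mat1)
  have "V ** V = mat 1"
  proof -
    have aa: "a * a * n2 v = 2 * a" unfolding a_def using npos by (simp add: field_simps)
    have "V ** V = (a *\<^sub>R outer v) ** (a *\<^sub>R outer v) - a *\<^sub>R outer v - (a *\<^sub>R outer v - mat 1)"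
      by (simp only: V_def mm_diff_left mm_diff_right matrix_mul_lid matrix_mul_rid)
    also have "(a *\<^sub>R outer v) ** (a *\<^sub>R outer v) = (a * (a * n2 v)) *\<^sub>R outer v"
      by (simp only: mm_scaleR_left mm_scaleR_right outer_sq scaleR_scaleR)
    also have "a * (a * n2 v) = a + a" using aa by simp
    also have "(a + a) *\<^sub>R outer v = a *\<^sub>R outer v + a *\<^sub>R outer v" by (rule scaleR_left_distrib)
    finally show ?thesis by simp
  qed
  then have uV: "unitary V" unfolding unitary_def cV by simp
  have tr: "ctrace (V ** X) = of_real a * qf X v - ctrace X"
    unfolding V_def by (simp add: mm_diff_left mm_scaleR_left ctrace_diff ctrace_scaleR ctrace_outer)
  define q where "q = Re (qf X v)"
  define t where "t = Re (ctrace X)"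
  have q: "qf X v = of_real q" using herm[of v] unfolding q_def by (simp add: complex_eq_iff)
  have t: "ctrace X = of_real t" using ctrace_real[OF herm] unfolding t_def by (simp add: complex_eq_iff)
  have e1: "(of_real a * of_real q - of_real t :: complex) = of_real (a * q - t)" by simp
  have h1: "\<bar>a * q - t\<bar> \<le> trace_norm X"
    using trace_norm_upper[OF uV, of X] unfolding tr q t e1 norm_of_real .
  have h2: "\<bar>t\<bar> \<le> trace_norm X" using trace_norm_ge_trace[of X] unfolding t norm_of_real .
  have "\<bar>a * q\<bar> \<le> \<bar>a * q - t\<bar> + \<bar>t\<bar>" using abs_triangle_ineq[of "a*q - t" t] by simp
  moreover have "\<bar>a * q\<bar> = a * \<bar>q\<bar>" using npos unfolding a_def by (simp add: abs_mult)
  ultimately have "a * \<bar>q\<bar> \<le> 2 * trace_norm X" using h1 h2 by linarith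
  then have "\<bar>q\<bar> \<le> trace_norm X * n2 v"
    using npos unfolding a_def by (simp add: field_simps)
  then show ?thesis unfolding q_def .
qed

lemma psd_trace_norm:
  assumes herm: "\<And>v. Im (qf X v) = 0"
  shows "psd (trace_norm X *\<^sub>R mat 1 - X)" "psd (trace_norm X *\<^sub>R mat 1 + X)"
  unfolding psd_qf sf_diff_mat sf_add_mat sf_scaleR_mat qf_mat1
proof (safe)
  fix v
  have h: "\<bar>Re (qf X v)\<bar> \<le> trace_norm X * n2 v" by (rule trace_norm_qf[OF herm])
  show "Im (of_real (trace_norm X) * of_real (n2 v) - qf X v) = 0"
       "Im (of_real (trace_norm X) * of_real (n2 v) + qf X v) = 0" using herm[of v] by simp_all
  show "0 \<le> Re (of_real (trace_norm X) * of_real (n2 v) - qf X v)"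
       "0 \<le> Re (of_real (trace_norm X) * of_real (n2 v) + qf X v)" using h by (simp_all add: abs_le_iff)
qed

definition ip :: "complex^'n::finite \<Rightarrow> complex^'n \<Rightarrow> complex" where
  "ip u w = (\<Sum>i\<in>UNIV. cnj (u$i) * w$i)"

lemma sf_ip: "sf M u v = ip u (M *v v)"
  by (simp add: sf_def ip_def matrix_vector_mult_def sum_distrib_left mult_ac)

lemma ip_adj: "ip u (A *v w) = ip (cadj A *v u) w"
  unfolding ip_def matrix_vector_mult_def cadj_def
  by (simp add: sum_distrib_left sum_distrib_right mult_ac, subst sum.swap, simp add: mult_ac)

lemma qf_conj: "qf (A ** X ** cadj A) v = qf X (cadj A *v v)"
proof -
  have "qf (A ** X ** cadj A) v = ip v (A *v (X *v (cadj A *v v)))"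
    by (simp add: sf_ip matrix_vector_mul_assoc matrix_mul_assoc)
  also have "\<dots> = qf X (cadj A *v v)" by (simp add: ip_adj sf_ip)
  finally show ?thesis .
qed

lemma psd_conj: "psd X \<Longrightarrow> psd (A ** X ** cadj A)"
  unfolding psd_qf qf_conj by blast

lemma ctrace_conj: "unitary A \<Longrightarrow> ctrace (A ** X ** cadj A) = ctrace X"
  unfolding unitary_def
  by (metis ctrace_comm matrix_mul_assoc matrix_mul_lid)

lemma linear_qf: "linear (\<lambda>M. qf M v)"
  by (rule linearI) (simp_all add: sf_add_mat sf_scaleR_mat cscale)
lemma linear_ctrace: "linear (ctrace :: 'n::finite cmat \<Rightarrow> complex)"
  by (rule linearI) (simp_all add: ctrace_add ctrace_scaleR cscale)
lemma linear_nth2: "linear (\<lambda>M::'n::finite cmat. M $ i $ j)"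
  by (rule linearI) simp_all
lemma linear_kron_right: "linear (kron A)"
  by (rule linearI) (simp_all add: kron_add_right kron_scaleR_right)

definition Tw :: "'g measure \<Rightarrow> ('g \<Rightarrow> 'n::finite cmat) \<Rightarrow> 'n cmat \<Rightarrow> 'n cmat" where
  "Tw M K X = integral\<^sup>L M (\<lambda>g. K g ** X ** cadj (K g))"

lemma cont_conj:
  assumes "continuous_on UNIV K"
  shows "continuous_on UNIV (\<lambda>g. K g ** X ** cadj (K g))"
proof -
  have e: "(\<lambda>g. K g ** X ** cadj (K g)) = (\<lambda>g. \<chi> i j. \<Sum>k\<in>UNIV. (\<Sum>l\<in>UNIV. K g$i$l * X$l$k) * cnj (K g$j$k))"
    by (simp add: fun_eq_iff vec_eq_iff matrix_matrix_mult_def cadj_def)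
  show ?thesis unfolding e
    by (intro continuous_intros continuous_on_component assms)
qed

locale twset =
  fixes M :: "'g::topological_space measure"
  assumes prob: "prob_space M" and sp: "space M = UNIV" and sb: "sets M = sets borel"
    and cpt: "compact (UNIV :: 'g set)"
begin

lemma integrable_cont:
  fixes h :: "'g \<Rightarrow> 'n::finite cmat"
  assumes "continuous_on UNIV h"
  shows "integrable M h"
proof -
  interpret prob_space M by (rule prob)
  have m: "h \<in> borel_measurable M"
    using borel_measurable_continuous_onI[OF assms] measurable_cong_sets[OF sb refl] by blast
  have "compact (h ` UNIV)" by (rule compact_continuous_image[OF assms cpt])
  then obtain B where B: "\<And>x. x \<in> h ` UNIV \<Longrightarrow> norm x \<le> B"
    using compact_imp_bounded bounded_iff by metis
  show ?thesis
    by (rule integrable_const_bound[where B=B]) (use B m in auto)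
qed

lemma integral_const_M: "integral\<^sup>L M (\<lambda>g. c) = (c::'b::{banach,second_countable_topology})"
proof -
  interpret prob_space M by (rule prob)
  show ?thesis by (simp add: prob_space)
qed

context
  fixes K :: "'g \<Rightarrow> 'n::finite cmat"
  assumes Kc: "continuous_on UNIV K" and Ku: "\<And>g. unitary (K g)"
begin

lemma int_conj: "integrable M (\<lambda>g. K g ** X ** cadj (K g))"
  by (rule integrable_cont[OF cont_conj[OF Kc]])

lemma Tw_add: "Tw M K (X + Y) = Tw M K X + Tw M K Y"
  unfolding Tw_def
  by (simp add: matrix_add_ldistrib mm_add_left int_conj)

lemma Tw_diff: "Tw M K (X - Y) = Tw M K X - Tw M K Y"
  unfolding Tw_def
  by (simp add: mm_diff_right mm_diff_left int_conj)

lemma Tw_scaleR: "Tw M K (c *\<^sub>R X) = c *\<^sub>R Tw M K X"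
  unfolding Tw_def
  by (simp add: mm_scaleR_right mm_scaleR_left)

lemma Tw_zero: "Tw M K 0 = 0"
  unfolding Tw_def by simp

lemma Tw_psd: assumes "psd X" shows "psd (Tw M K X)"
  unfolding psd_qf
proof
  fix v :: "complex^'n"
  have bl: "bounded_linear (\<lambda>Z. qf Z v)" using linear_qf linear_conv_bounded_linear by blast
  have e: "qf (Tw M K X) v = integral\<^sup>L M (\<lambda>g. qf (K g ** X ** cadj (K g)) v)"
    unfolding Tw_def by (rule integral_bounded_linear[OF bl int_conj, symmetric])
  define f where "f g = Re (qf (K g ** X ** cadj (K g)) v)" for g
  have fg: "qf (K g ** X ** cadj (K g)) v = of_real (f g)" for g
    using psd_conj[OF assms, of "K g"] unfolding psd_qf f_def by (simp add: complex_eq_iff)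
  have "qf (Tw M K X) v = of_real (integral\<^sup>L M f)"
    unfolding e fg by simp
  moreover have "0 \<le> integral\<^sup>L M f"
    by (rule integral_nonneg_AE) (use psd_conj[OF assms] in \<open>auto simp: f_def psd_qf\<close>)
  ultimately show "Im (qf (Tw M K X) v) = 0 \<and> 0 \<le> Re (qf (Tw M K X) v)" by simp
qed

lemma Tw_trace: "ctrace (Tw M K X) = ctrace X"
proof -
  have bl: "bounded_linear (ctrace :: 'n cmat \<Rightarrow> complex)" using linear_ctrace linear_conv_bounded_linear by blast
  have "ctrace (Tw M K X) = integral\<^sup>L M (\<lambda>g. ctrace (K g ** X ** cadj (K g)))"
    unfolding Tw_def by (rule integral_bounded_linear[OF bl int_conj, symmetric])
  also have "\<dots> = integral\<^sup>L M (\<lambda>g. ctrace X)" by (simp add: ctrace_conj Ku)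
  also have "\<dots> = ctrace X" by (rule integral_const_M)
  finally show ?thesis .
qed

end

end

definition Sset :: "('r::finite \<times> 'x::finite) cmat \<Rightarrow> real set" where
  "Sset \<Omega> = {Re (ctrace Y) | Y :: 'x cmat. psd Y \<and> psd (kron (mat 1 :: 'r cmat) Y - \<Omega>)}"

lemma Hmin_Sset: "Hmin \<Omega> = - log 2 (Inf (Sset \<Omega>))"
  by (simp add: Hmin_def Sset_def)

lemma kron_zero_right[simp]: "kron A 0 = 0"
  by (simp add: kron_def vec_eq_iff)

lemma psd_trace_nonneg: "psd Z \<Longrightarrow> 0 \<le> Re (ctrace Z)"
  unfolding ctrace_def by (simp add: sum_nonneg psd_diag)

lemma ctrace_mat1: "ctrace (mat 1 :: 'n::finite cmat) = of_nat CARD('n)"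
  by (simp add: ctrace_def mat_def)

lemma psd_herm_qf: "psd A \<Longrightarrow> Im (qf A v) = 0"
  unfolding psd_qf by blast

lemma trace_norm_nonneg: "0 \<le> trace_norm X"
  using trace_norm_ge_trace[of X] norm_ge_zero order_trans by blast

locale twk = twset M for M :: "'g::topological_space measure" +
  fixes UR :: "'g \<Rightarrow> 'r::finite cmat" and UX :: "'g \<Rightarrow> 'x::finite cmat" and \<tau> :: "'x cmat"
  assumes URc: "continuous_on UNIV UR" and URu: "\<And>g. unitary (UR g)"
    and UXc: "continuous_on UNIV UX" and UXu: "\<And>g. unitary (UX g)"
    and \<tau>: "is_state \<tau>"
begin

definition K :: "'g \<Rightarrow> ('r \<times> 'x) cmat" where "K g = kron (UR g) (UX g)"

lemma Kc: "continuous_on UNIV K"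
proof -
  have e: "K = (\<lambda>g. \<chi> p q. UR g $ fst p $ fst q * UX g $ snd p $ snd q)"
    by (simp add: fun_eq_iff K_def kron_def)
  show ?thesis unfolding e
    by (intro continuous_intros continuous_on_component URc UXc)
qed

lemma Ku: "unitary (K g)"
  unfolding K_def by (intro unitary_kron URu UXu)

lemma twirl_Tw: "twirl M UR UX \<Omega> = Tw M K \<Omega>"
  by (simp add: twirl_def Tw_def K_def)

definition \<tau>a :: "'x cmat" where "\<tau>a = Tw M UX \<tau>"

lemma \<tau>a_psd: "psd \<tau>a"
  unfolding \<tau>a_def by (rule Tw_psd[OF UXc UXu]) (use \<tau> in \<open>simp add: is_state_def\<close>)

lemma \<tau>a_trace: "ctrace \<tau>a = 1"
  unfolding \<tau>a_def using Tw_trace[OF UXc UXu, of \<tau>] \<tau> by (simp add: is_state_def)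

lemma GI: "Tw M K (kron (mat 1) \<tau>) = kron (mat 1) \<tau>a"
proof -
  have pw: "K g ** kron (mat 1) \<tau> ** cadj (K g) = kron (mat 1) (UX g ** \<tau> ** cadj (UX g))" for g
    using URu[of g] unfolding K_def unitary_def by (simp add: cadj_kron kron_mult)
  have bl: "bounded_linear (kron (mat 1 :: 'r cmat) :: 'x cmat \<Rightarrow> _)"
    using linear_kron_right linear_conv_bounded_linear by blast
  show ?thesis unfolding Tw_def \<tau>a_def pw
    by (rule integral_bounded_linear[OF bl int_conj[OF UXc UXu]])
qed

abbreviation G :: "('r \<times> 'x) cmat \<Rightarrow> ('r \<times> 'x) cmat" where "G \<equiv> Tw M K"

abbreviation S :: "'r cmat \<Rightarrow> real set" where "S A \<equiv> Sset (G (kron A \<tau>))"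

lemma Gpsd: "psd D \<Longrightarrow> psd (G (kron D \<tau>))"
  by (rule Tw_psd[OF Kc Ku], rule psd_kron) (use \<tau> in \<open>auto simp: is_state_def\<close>)

lemma G_lin: "G (kron (B + c *\<^sub>R mat 1 - A) \<tau>) = G (kron B \<tau>) + kron (mat 1) (c *\<^sub>R \<tau>a) - G (kron A \<tau>)"
  by (simp add: kron_add_left kron_diff_left kron_scaleR_left Tw_add[OF Kc Ku] Tw_diff[OF Kc Ku]
      Tw_scaleR[OF Kc Ku] GI kron_scaleR_right)

lemma S_lower:
  assumes "psd A" "y \<in> S A"
  shows "Re (ctrace A) / CARD('r) \<le> y"
proof -
  obtain Y where Y: "y = Re (ctrace Y)" "psd Y" "psd (kron (mat 1 :: 'r cmat) Y - G (kron A \<tau>))"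
    using assms(2) unfolding Sset_def by blast
  have "0 \<le> Re (ctrace (kron (mat 1 :: 'r cmat) Y - G (kron A \<tau>)))"
    by (rule psd_trace_nonneg[OF Y(3)])
  also have "ctrace (kron (mat 1 :: 'r cmat) Y - G (kron A \<tau>)) = of_nat CARD('r) * ctrace Y - ctrace A"
    using \<tau> by (simp add: ctrace_diff ctrace_kron ctrace_mat1 Tw_trace[OF Kc Ku] is_state_def)
  finally have "Re (ctrace A) \<le> CARD('r) * y" unfolding Y by simp
  then show ?thesis by (simp add: field_simps)
qed

lemma S_bdd: "psd A \<Longrightarrow> bdd_below (S A)"
  using S_lower by (meson bdd_below.I)

lemma S_feas:
  assumes "psd Y" "psd (kron (mat 1 :: 'r cmat) Y - G (kron A \<tau>))"
  shows "Re (ctrace Y) \<in> S A"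
  using assms unfolding Sset_def by blast

lemma S_nonempty:
  assumes "psd A" shows "S A \<noteq> {}"
proof -
  define c where "c = trace_norm A"
  have c0: "0 \<le> c" unfolding c_def by (rule trace_norm_nonneg)
  have "psd (c *\<^sub>R mat 1 - A)"
    unfolding c_def by (rule psd_trace_norm(1)) (rule psd_herm_qf[OF assms])
  then have "psd (G (kron (0 + c *\<^sub>R mat 1 - A) \<tau>))" by (intro Gpsd) simp
  then have "psd (kron (mat 1 :: 'r cmat) (c *\<^sub>R \<tau>a) - G (kron A \<tau>))"
    unfolding G_lin by (simp add: kron_zero_left Tw_zero[OF Kc Ku])
  moreover have "psd (c *\<^sub>R \<tau>a)" by (rule psd_scaleR[OF \<tau>a_psd c0])
  ultimately show ?thesis using S_feas by blast
qed

lemma f_lower: "psd A \<Longrightarrow> Re (ctrace A) / CARD('r) \<le> Inf (S A)"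
  by (rule cInf_greatest[OF S_nonempty]) (auto intro: S_lower)

lemma f_upper:
  assumes A: "psd A" and B: "psd B" and c: "0 \<le> c" and D: "psd (B + c *\<^sub>R mat 1 - A)"
  shows "Inf (S A) \<le> Inf (S B) + c"
proof -
  have "Inf (S A) - c \<le> Inf (S B)"
  proof (rule cInf_greatest[OF S_nonempty[OF B]])
    fix y assume "y \<in> S B"
    then obtain Y where Y: "y = Re (ctrace Y)" "psd Y" "psd (kron (mat 1 :: 'r cmat) Y - G (kron B \<tau>))"
      unfolding Sset_def by blast
    have "psd ((kron (mat 1 :: 'r cmat) Y - G (kron B \<tau>)) + G (kron (B + c *\<^sub>R mat 1 - A) \<tau>))"
      by (intro psd_add Y(3) Gpsd D)
    also have "(kron (mat 1 :: 'r cmat) Y - G (kron B \<tau>)) + G (kron (B + c *\<^sub>R mat 1 - A) \<tau>)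
        = kron (mat 1) (Y + c *\<^sub>R \<tau>a) - G (kron A \<tau>)"
      unfolding G_lin by (simp add: kron_add_right algebra_simps)
    finally have "Re (ctrace (Y + c *\<^sub>R \<tau>a)) \<in> S A"
      by (intro S_feas psd_add Y(2) psd_scaleR \<tau>a_psd c)
    then have "Inf (S A) \<le> Re (ctrace (Y + c *\<^sub>R \<tau>a))"
      by (rule cInf_lower[OF _ S_bdd[OF A]])
    also have "\<dots> = y + c" unfolding Y by (simp add: ctrace_add ctrace_scaleR \<tau>a_trace)
    finally show "Inf (S A) - c \<le> y" by simp
  qed
  then show ?thesis by simp
qed

lemma f_zero: "Inf (S 0) \<le> 0"
proof -
  have "Re (ctrace (0 :: 'x cmat)) \<in> S 0"
    by (rule S_feas) (simp_all add: psd_zero Tw_zero[OF Kc Ku])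
  then show ?thesis using cInf_lower[OF _ S_bdd[OF psd_zero]] by fastforce
qed

end

lemma ln_diff_le: fixes x F :: real assumes "0 < x" "0 < F" shows "ln x - ln F \<le> (x - F) / F"
proof -
  have "ln (x / F) \<le> x / F - 1" using ln_le_minus_one[of "x/F"] assms by simp
  then show ?thesis using assms by (simp add: ln_div diff_divide_distrib)
qed

lemma pair_bound:
  fixes d T t F x :: real
  assumes "0 < d" "0 < t" "0 \<le> T" "1/d \<le> F" "t/d \<le> x" "x \<le> F + T" "F \<le> x + T"
  shows "ln x - ln F \<le> T * d" "ln F - ln x \<le> T * d / t"
proof -
  have Fp: "0 < F" using assms by (smt (verit) divide_pos_pos)
  have xp: "0 < x" using assms by (smt (verit) divide_pos_pos)
  have "ln x - ln F \<le> (x - F) / F" by (rule ln_diff_le[OF xp Fp])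
  also have "\<dots> \<le> T / F" using Fp assms by (simp add: divide_right_mono)
  also have "\<dots> \<le> T / (1/d)" using assms Fp by (intro divide_left_mono) auto
  finally show "ln x - ln F \<le> T * d" by simp
  have "ln F - ln x \<le> (F - x) / x" by (rule ln_diff_le[OF Fp xp])
  also have "\<dots> \<le> T / x" using xp assms by (simp add: divide_right_mono)
  also have "\<dots> \<le> T / (t/d)" using assms xp by (intro divide_left_mono) auto
  finally show "ln F - ln x \<le> T * d / t" by simp
qed

lemma k1: fixes \<epsilon> :: real assumes "0 \<le> \<epsilon>" "\<epsilon> < 1/2" shows "1 + 1 / (1 - \<epsilon>) \<le> 2 / (1 - 2 * \<epsilon>)"
proof -
  have p1: "0 < 1 - \<epsilon>" "0 < 1 - 2 * \<epsilon>" using assms by linarith+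
  have sq: "\<epsilon> * \<epsilon> \<le> \<epsilon>" using assms by (intro mult_left_le_one_le) auto
  have "(2 - \<epsilon>) * (1 - 2 * \<epsilon>) \<le> 2 * (1 - \<epsilon>)"
    using sq assms by (simp add: algebra_simps)
  then have "(2 - \<epsilon>) / (1 - \<epsilon>) \<le> 2 / (1 - 2 * \<epsilon>)"
    using p1 by (simp add: divide_simps)
  moreover have "1 + 1 / (1 - \<epsilon>) = (2 - \<epsilon>) / (1 - \<epsilon>)" using p1 by (simp add: field_simps)
  ultimately show ?thesis by simp
qed
lemma k2: fixes \<epsilon> d :: real assumes "0 \<le> \<epsilon>" "2 \<le> d" shows "4 * \<epsilon> * d \<le> 2 * d^2 * \<epsilon>"
proof -
  have "2 * (2 * \<epsilon> * d) \<le> d * (2 * \<epsilon> * d)" using assms by (intro mult_right_mono) auto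
  then show ?thesis by (simp add: power2_eq_square mult_ac)
qed

lemma final_real:
  fixes d T t \<epsilon> Fs xs Fr xr :: real
  assumes d1: "d = 1 \<or> 2 \<le> d" and eps: "0 \<le> \<epsilon>" "\<epsilon> < 1/2"
    and Th: "T/2 + \<bar>1 - t\<bar>/2 \<le> \<epsilon>" "1 - t \<le> T" "0 \<le> T"
    and Fs: "1/d \<le> Fs" "t/d \<le> xs" "xs \<le> Fs + T" "Fs \<le> xs + T"
    and Fr: "1/d \<le> Fr" "t/d \<le> xr" "xr \<le> Fr + T" "Fr \<le> xr + T"
    and one: "d = 1 \<Longrightarrow> Fs \<le> 1 \<and> xs \<le> t \<and> Fr \<le> 1 \<and> xr \<le> t"
  shows "\<bar>(- log 2 xs + log 2 xr) - (- log 2 Fs + log 2 Fr)\<bar> \<le> 2 * d^2 * \<epsilon> / (ln 2 * (1 - 2 * \<epsilon>))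
       \<and> (t = 1 \<longrightarrow> \<bar>(- log 2 xs + log 2 xr) - (- log 2 Fs + log 2 Fr)\<bar> \<le> 2 * d^2 * \<epsilon> / ln 2)"
proof -
  have Th1: "T + \<bar>1 - t\<bar> \<le> 2 * \<epsilon>" using Th(1) by (simp add: field_simps)
  have T0: "0 \<le> T" "T \<le> 2 * \<epsilon>" using Th(3) Th1 abs_ge_zero[of "1-t"] by linarith+
  have a1: "1 - t \<le> \<bar>1 - t\<bar>" by simp
  have t1: "1 - \<epsilon> \<le> t" using Th1 Th(2) a1 by linarith
  have tpos: "0 < t" using t1 eps by linarith
  have dpos: "0 < d" using d1 by auto
  have ln2: "0 < ln (2::real)" by simp
  have e: "(- log 2 xs + log 2 xr) - (- log 2 Fs + log 2 Fr) = ((ln xr - ln Fr) + (ln Fs - ln xs)) / ln 2"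
    by (simp add: log_def field_simps)
  have nn: "0 \<le> 2 * d^2 * \<epsilon> / (ln 2 * (1 - 2 * \<epsilon>))" "0 \<le> 2 * d^2 * \<epsilon> / ln 2"
    using eps by (auto intro!: divide_nonneg_pos mult_pos_pos)
  show ?thesis
  proof (cases "d = 1")
    case True
    then have "Fs = 1" "xs = t" "Fr = 1" "xr = t" using one Fs Fr by auto
    then show ?thesis using nn by simp
  next
    case False
    then have d2: "2 \<le> d" using d1 by auto
    note bs = pair_bound[OF dpos tpos T0(1) Fs] and br = pair_bound[OF dpos tpos T0(1) Fr]
    have ab: "\<bar>(ln xr - ln Fr) + (ln Fs - ln xs)\<bar> \<le> T * d + T * d / t"
      using bs br by (auto simp: abs_le_iff)
    have key1: "1 + 1 / t \<le> 2 / (1 - 2 * \<epsilon>)"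
    proof -
      have "1 / t \<le> 1 / (1 - \<epsilon>)" using t1 eps by (intro divide_left_mono) auto
      then show ?thesis using k1[OF eps] by linarith
    qed
    have "T * d + T * d / t = T * d * (1 + 1/t)" by (simp add: field_simps)
    also have "\<dots> \<le> (2 * \<epsilon>) * d * (2 / (1 - 2 * \<epsilon>))"
      using T0 dpos key1 tpos by (intro mult_mono) auto
    also have "\<dots> = (4 * \<epsilon> * d) / (1 - 2 * \<epsilon>)" by simp
    also have "\<dots> \<le> 2 * d^2 * \<epsilon> / (1 - 2 * \<epsilon>)"
      using k2[OF eps(1) d2] eps by (intro divide_right_mono) auto
    finally have g1: "\<bar>(ln xr - ln Fr) + (ln Fs - ln xs)\<bar> \<le> 2 * d^2 * \<epsilon> / (1 - 2 * \<epsilon>)"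
      using ab by linarith
    have g2: "t = 1 \<Longrightarrow> \<bar>(ln xr - ln Fr) + (ln Fs - ln xs)\<bar> \<le> 2 * d^2 * \<epsilon>"
    proof -
      assume "t = 1"
      then have "T * d + T * d / t = 2 * T * d" by simp
      also have "\<dots> \<le> 2 * (2 * \<epsilon>) * d" using T0 dpos by simp
      also have "\<dots> \<le> 2 * d^2 * \<epsilon>" using k2[OF eps(1) d2] by simp
      finally show ?thesis using ab by linarith
    qed
    have fin: "\<bar>Z / ln 2\<bar> \<le> W / ln 2" if "\<bar>Z\<bar> \<le> W" for Z W :: real
      using that ln2 by (simp add: abs_divide divide_right_mono)
    have eq: "2 * d^2 * \<epsilon> / (1 - 2 * \<epsilon>) / ln 2 = 2 * d^2 * \<epsilon> / (ln 2 * (1 - 2 * \<epsilon>))"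
      by (simp add: divide_divide_eq_left mult.commute)
    have h1: "\<bar>((ln xr - ln Fr) + (ln Fs - ln xs)) / ln 2\<bar> \<le> 2 * d^2 * \<epsilon> / (ln 2 * (1 - 2 * \<epsilon>))"
      using fin[OF g1] unfolding eq .
    show ?thesis unfolding e using h1 fin[OF g2] by blast
  qed
qed

lemma card1_mat:
  assumes "CARD('n::finite) = 1" "psd (A::'n cmat)"
  shows "A = Re (ctrace A) *\<^sub>R mat 1"
proof -
  obtain a :: 'n where U: "UNIV = {a}" using assms(1) card_1_singletonE by blast
  have all: "x = a" for x :: 'n using U by blast
  have tr: "ctrace A = A$a$a" unfolding ctrace_def U by simp
  have im: "Im (A$a$a) = 0" using psd_diag[OF assms(2)] by blast
  show ?thesis
  proof (subst vec_eq_iff, intro allI, subst vec_eq_iff, intro allI)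
    fix i j :: 'n
    show "A$i$j = (Re (ctrace A) *\<^sub>R mat 1) $ i $ j"
      using im unfolding tr all[of i] all[of j] by (simp add: mat_def complex_eq_iff)
  qed
qed

theorem lemma2:
  fixes M :: "'g::{t2_space, group_add} measure"
    and UA :: "'g \<Rightarrow> 'a::finite cmat"
    and UB :: "'g \<Rightarrow> 'b::finite cmat"
    and \<rho> :: "'a cmat" and \<sigma> :: "'b cmat"
    and \<eta> \<eta>' :: "'b cmat"
    and \<epsilon> :: real
  assumes "compact_group TYPE('g)"
    and "normalized_haar M"
    and "unitary_rep UA" and "unitary_rep UB"
    and "is_state \<rho>" and "is_state \<sigma>" and "is_state \<eta>"
    and "0 \<le> \<epsilon>" and "\<epsilon> < 1/2"
    and "\<eta>' \<in> eps_ball \<epsilon> \<eta>"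
  shows "\<bar>Delta_H M UA UB \<eta>' \<rho> \<sigma> - Delta_H M UA UB \<eta> \<rho> \<sigma>\<bar>
           \<le> 2 * real (CARD('b))^2 * \<epsilon> / (ln 2 * (1 - 2 * \<epsilon>))
         \<and> (ctrace \<eta>' = 1 \<longrightarrow>
         \<bar>Delta_H M UA UB \<eta>' \<rho> \<sigma> - Delta_H M UA UB \<eta> \<rho> \<sigma>\<bar>
           \<le> 2 * real (CARD('b))^2 * \<epsilon> / ln 2)"
proof -
  note cg = assms(1)[unfolded compact_group_def]
  note nh = assms(2)[unfolded normalized_haar_def]
  have cpt: "compact (UNIV::'g set)" using cg by blast
  have nh1: "space M = UNIV" "sets M = sets borel" "prob_space M" using nh by blast+
  have "twset M" unfolding twset_def using cpt nh1 by blast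
  then interpret ts: twset M .
  define UR where "UR = (\<lambda>g. cconj (UB g))"
  have UAc: "continuous_on UNIV UA" and UAu: "\<And>g. unitary (UA g)"
    using assms(3) unfolding unitary_rep_def by auto
  have UBc: "continuous_on UNIV UB" and UBu: "\<And>g. unitary (UB g)"
    using assms(4) unfolding unitary_rep_def by auto
  have URc: "continuous_on UNIV UR"
  proof -
    have e: "UR = (\<lambda>g. \<chi> i j. cnj (UB g $ i $ j))" unfolding UR_def cconj_def by simp
    show ?thesis unfolding e by (intro continuous_intros continuous_on_component UBc)
  qed
  have URu: "\<And>g. unitary (UR g)" unfolding UR_def by (intro unitary_cconj UBu)
  have "twk M UR UB \<sigma>" unfolding twk_def twk_axioms_def
    using ts.twset_axioms URc URu UBc UBu assms(6) by blast
  then interpret s: twk M UR UB \<sigma> .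
  have "twk M UR UA \<rho>" unfolding twk_def twk_axioms_def
    using ts.twset_axioms URc URu UAc UAu assms(5) by blast
  then interpret r: twk M UR UA \<rho> .
  have psd\<eta>: "psd \<eta>" and tr\<eta>: "ctrace \<eta> = 1" using assms(7) unfolding is_state_def by auto
  have psd\<eta>': "psd \<eta>'" and tr\<eta>': "Re (ctrace \<eta>') \<le> 1" and gd: "gen_trace_dist \<eta> \<eta>' \<le> \<epsilon>"
    using assms(10) unfolding eps_ball_def is_subnormalized_def by auto
  define T where "T = trace_norm (\<eta> - \<eta>')"
  define t where "t = Re (ctrace \<eta>')"
  define d where "d = real CARD('b)"
  have T0: "0 \<le> T" unfolding T_def by (rule trace_norm_nonneg)
  have Th1: "T/2 + \<bar>1 - t\<bar>/2 \<le> \<epsilon>" using gd tr\<eta> unfolding gen_trace_dist_def T_def t_def by simp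
  have herm: "Im (qf (\<eta> - \<eta>') v) = 0" for v
    using psd\<eta> psd\<eta>' unfolding psd_qf sf_diff_mat by simp
  have P1: "psd (\<eta>' + T *\<^sub>R mat 1 - \<eta>)"
  proof -
    have "psd (T *\<^sub>R mat 1 - (\<eta> - \<eta>'))" unfolding T_def by (rule psd_trace_norm(1)[OF herm])
    moreover have "T *\<^sub>R mat 1 - (\<eta> - \<eta>') = \<eta>' + T *\<^sub>R mat 1 - \<eta>" by (simp add: algebra_simps)
    ultimately show ?thesis by simp
  qed
  have P2: "psd (\<eta> + T *\<^sub>R mat 1 - \<eta>')"
  proof -
    have "psd (T *\<^sub>R mat 1 + (\<eta> - \<eta>'))" unfolding T_def by (rule psd_trace_norm(2)[OF herm])
    moreover have "T *\<^sub>R mat 1 + (\<eta> - \<eta>') = \<eta> + T *\<^sub>R mat 1 - \<eta>'" by (simp add: algebra_simps)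
    ultimately show ?thesis by simp
  qed
  have Th2: "1 - t \<le> T"
  proof -
    have "Re (ctrace (\<eta> - \<eta>')) \<le> cmod (ctrace (\<eta> - \<eta>'))" by (rule complex_Re_le_cmod)
    also have "\<dots> \<le> T" unfolding T_def by (rule trace_norm_ge_trace)
    finally show ?thesis using tr\<eta> unfolding t_def ctrace_diff by simp
  qed
  have t0: "0 \<le> t" unfolding t_def by (rule psd_trace_nonneg[OF psd\<eta>'])
  have dint: "d = 1 \<or> 2 \<le> d"
  proof -
    have "0 < CARD('b)" by simp
    then have "CARD('b) = 1 \<or> 2 \<le> CARD('b)" by linarith
    then show ?thesis unfolding d_def by auto
  qed
  have card1: "CARD('b) = 1" if "d = 1" using that unfolding d_def by simp
  have e\<eta>: "\<eta> = 1 *\<^sub>R mat 1" if "d = 1"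
    using card1_mat[OF card1[OF that] psd\<eta>] tr\<eta> by simp
  have e\<eta>': "\<eta>' = t *\<^sub>R mat 1" if "d = 1"
    using card1_mat[OF card1[OF that] psd\<eta>'] unfolding t_def by simp
  have H1: "H_eta M UR UB A \<sigma> = - log 2 (Inf (s.S A))" for A
    unfolding H_eta_def s.twirl_Tw Hmin_Sset ..
  have H2: "H_eta M UR UA A \<rho> = - log 2 (Inf (r.S A))" for A
    unfolding H_eta_def r.twirl_Tw Hmin_Sset ..
  have DH: "Delta_H M UA UB A \<rho> \<sigma> = - log 2 (Inf (s.S A)) + log 2 (Inf (r.S A))" for A
    unfolding Delta_H_def UR_def[symmetric] H1 H2 by simp
  have main: "\<bar>(- log 2 (Inf (s.S \<eta>')) + log 2 (Inf (r.S \<eta>'))) - (- log 2 (Inf (s.S \<eta>)) + log 2 (Inf (r.S \<eta>)))\<bar>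
      \<le> 2 * d^2 * \<epsilon> / (ln 2 * (1 - 2 * \<epsilon>))
    \<and> (t = 1 \<longrightarrow> \<bar>(- log 2 (Inf (s.S \<eta>')) + log 2 (Inf (r.S \<eta>'))) - (- log 2 (Inf (s.S \<eta>)) + log 2 (Inf (r.S \<eta>)))\<bar>
      \<le> 2 * d^2 * \<epsilon> / ln 2)"
  proof (rule final_real[OF dint assms(8,9) Th1 Th2 T0])
    show "1/d \<le> Inf (s.S \<eta>)" using s.f_lower[OF psd\<eta>] tr\<eta> unfolding d_def by simp
    show "t/d \<le> Inf (s.S \<eta>')" using s.f_lower[OF psd\<eta>'] unfolding d_def t_def by simp
    show "Inf (s.S \<eta>') \<le> Inf (s.S \<eta>) + T" by (rule s.f_upper[OF psd\<eta>' psd\<eta> T0 P2])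
    show "Inf (s.S \<eta>) \<le> Inf (s.S \<eta>') + T" by (rule s.f_upper[OF psd\<eta> psd\<eta>' T0 P1])
    show "1/d \<le> Inf (r.S \<eta>)" using r.f_lower[OF psd\<eta>] tr\<eta> unfolding d_def by simp
    show "t/d \<le> Inf (r.S \<eta>')" using r.f_lower[OF psd\<eta>'] unfolding d_def t_def by simp
    show "Inf (r.S \<eta>') \<le> Inf (r.S \<eta>) + T" by (rule r.f_upper[OF psd\<eta>' psd\<eta> T0 P2])
    show "Inf (r.S \<eta>) \<le> Inf (r.S \<eta>') + T" by (rule r.f_upper[OF psd\<eta> psd\<eta>' T0 P1])
    assume d1: "d = 1"
    have z1: "psd (0 + 1 *\<^sub>R mat 1 - \<eta>)" using e\<eta>[OF d1] by (simp add: psd_zero)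
    have z2: "psd (0 + t *\<^sub>R mat 1 - \<eta>')" using e\<eta>'[OF d1] by (simp add: psd_zero)
    have "Inf (s.S \<eta>) \<le> Inf (s.S 0) + 1" by (rule s.f_upper[OF psd\<eta> psd_zero _ z1]) simp
    moreover have "Inf (s.S \<eta>') \<le> Inf (s.S 0) + t" by (rule s.f_upper[OF psd\<eta>' psd_zero t0 z2])
    moreover have "Inf (r.S \<eta>) \<le> Inf (r.S 0) + 1" by (rule r.f_upper[OF psd\<eta> psd_zero _ z1]) simp
    moreover have "Inf (r.S \<eta>') \<le> Inf (r.S 0) + t" by (rule r.f_upper[OF psd\<eta>' psd_zero t0 z2])
    ultimately show "Inf (s.S \<eta>) \<le> 1 \<and> Inf (s.S \<eta>') \<le> t \<and> Inf (r.S \<eta>) \<le> 1 \<and> Inf (r.S \<eta>') \<le> t"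
      using s.f_zero r.f_zero by linarith
  qed
  have tt: "ctrace \<eta>' = 1 \<Longrightarrow> t = 1" unfolding t_def by simp
  show ?thesis unfolding DH using main tt unfolding d_def by auto
qed

end
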